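(* Let $X,Y$ be distinct candidates, let $T\in SO(P)$ satisfy $T(\mathbf r_{X>Y})=\mathbf r_{X>Y}$, and let $\mathbf p\in P$. Then there exists $\mathbf q\in\mathbb R\mathbf 1$ such that $T(\mathbf p)+\mathbf q\sim_{X,Y}\mathbf p$.
   Context: Fix an integer $n\ge 2$ and a set $\mathbf C$ of $n$ candidates. Fix a composition $\lambda=(\lambda_1,\dots,\lambda_m)$ of $n$ (positive integers with $\sum_i\lambda_i=n$), write $[m]=\{1,\dots,m\}$. A ballot is a function $b:\mathbf C\to[m]$ with $|b^{-1}(i)|=\lambda_i$ for every $i$; $\mathbf C_\lambda$ denotes the set of ballots. The profile space is $P=\mathbb R^{\mathbf C_\lambda}$ with basis $\{\delta_b\}$ (indicator functions) and inner product $\mathbf p\cdot\mathbf q=\sum_b\mathbf p(b)\mathbf q(b)$; $\mathbf 1=\sum_b\delta_b$. For candidates $X,Y$: $\mathbf a_{X>Y}=\sum_{b:\,b(X)<b(Y)}\delta_b$, $\mathbf r_{X>Y}=\mathbf a_{X>Y}-\mathbf a_{Y>X}$. Two profiles are $X,Y$-equivalent, $\mathbf p\sim_{X,Y}\mathbf q$, if $(\mathbf p-\mathbf q)\cdot\mathbf a_{X>Y}=0$ and $(\mathbf p-\mathbf q)\cdot\mathbf a_{Y>X}=0$. $SO(P)$ denotes the group of linear isometries of $P$ of determinant $1$. *)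

theory Defs
  imports Complex_Main "HOL-Combinatorics.Permutations"
begin

text \<open>Candidates are the elements of a finite type 'c (so the candidate set C is UNIV).
A composition lam is a list of positive naturals; m = length lam; [m] = {1..m};
lam_i = lam ! (i - 1).\<close>

definition is_composition :: "nat list \<Rightarrow> nat \<Rightarrow> bool" where
  "is_composition lam n \<longleftrightarrow> (\<forall>x\<in>set lam. 0 < x) \<and> sum_list lam = n"

definition ballots :: "nat list \<Rightarrow> ('c \<Rightarrow> nat) set" where
  "ballots lam = {b. (\<forall>c. b c \<in> {1..length lam}) \<and>
                     (\<forall>i\<in>{1..length lam}. card (b -` {i}) = lam ! (i - 1))}"

text \<open>Profiles: real functions on ballots, represented as functions on all of
'c => nat that vanish outside the ballot set.\<close>

type_synonym 'c profile = "('c \<Rightarrow> nat) \<Rightarrow> real"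

definition profiles :: "nat list \<Rightarrow> 'c profile set" where
  "profiles lam = {p. \<forall>b. b \<notin> ballots lam \<longrightarrow> p b = 0}"

definition pinner :: "nat list \<Rightarrow> 'c profile \<Rightarrow> 'c profile \<Rightarrow> real" where
  "pinner lam p q = (\<Sum>b\<in>ballots lam. p b * q b)"

definition delta :: "nat list \<Rightarrow> ('c \<Rightarrow> nat) \<Rightarrow> 'c profile" where
  "delta lam b = (\<lambda>b'. if b' = b \<and> b \<in> ballots lam then 1 else 0)"

definition ones :: "nat list \<Rightarrow> 'c profile" where
  "ones lam = (\<lambda>b. if b \<in> ballots lam then 1 else 0)"

definition a_pref :: "nat list \<Rightarrow> 'c \<Rightarrow> 'c \<Rightarrow> 'c profile" where
  "a_pref lam X Y = (\<lambda>b. if b \<in> ballots lam \<and> b X < b Y then 1 else 0)"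

definition r_pref :: "nat list \<Rightarrow> 'c \<Rightarrow> 'c \<Rightarrow> 'c profile" where
  "r_pref lam X Y = (\<lambda>b. a_pref lam X Y b - a_pref lam Y X b)"

definition equiv_XY :: "nat list \<Rightarrow> 'c \<Rightarrow> 'c \<Rightarrow> 'c profile \<Rightarrow> 'c profile \<Rightarrow> bool" where
  "equiv_XY lam X Y p q \<longleftrightarrow>
     pinner lam (\<lambda>b. p b - q b) (a_pref lam X Y) = 0 \<and>
     pinner lam (\<lambda>b. p b - q b) (a_pref lam Y X) = 0"

text \<open>Determinant of a linear map on P, via the Leibniz formula for its matrix
M c b = (T delta_b)(c) in the basis {delta_b}.\<close>

definition det_on :: "nat list \<Rightarrow> ('c profile \<Rightarrow> 'c profile) \<Rightarrow> real" where
  "det_on lam T = (\<Sum>\<sigma>\<in>{\<sigma>. \<sigma> permutes ballots lam}.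
      of_int (sign \<sigma>) * (\<Prod>b\<in>ballots lam. T (delta lam b) (\<sigma> b)))"

definition SO_P :: "nat list \<Rightarrow> ('c profile \<Rightarrow> 'c profile) set" where
  "SO_P lam = {T.
     (\<forall>p\<in>profiles lam. T p \<in> profiles lam) \<and>
     (\<forall>p\<in>profiles lam. \<forall>q\<in>profiles lam. T (\<lambda>b. p b + q b) = (\<lambda>b. T p b + T q b)) \<and>
     (\<forall>p\<in>profiles lam. \<forall>c::real. T (\<lambda>b. c * p b) = (\<lambda>b. c * T p b)) \<and>
     (\<forall>p\<in>profiles lam. pinner lam (T p) (T p) = pinner lam p p) \<and>
     det_on lam T = 1}"

end

theory Submission
  imports Defs
begin

lemma finite_ballots: "finite (ballots lam :: ('c::finite \<Rightarrow> nat) set)"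
proof -
  have "ballots lam \<subseteq> {f::'c\<Rightarrow>nat. \<forall>x. (x \<in> UNIV \<longrightarrow> f x \<in> {1..length lam}) \<and> (x \<notin> UNIV \<longrightarrow> f x = 0)}"
    by (auto simp: ballots_def)
  moreover have "finite {f::'c\<Rightarrow>nat. \<forall>x. (x \<in> UNIV \<longrightarrow> f x \<in> {1..length lam}) \<and> (x \<notin> UNIV \<longrightarrow> f x = 0)}"
    by (rule finite_set_of_finite_funs) auto
  ultimately show ?thesis by (rule finite_subset)
qed

lemma swap_ballot:
  assumes "b \<in> ballots lam"
  shows "b \<circ> Transposition.transpose X Y \<in> ballots lam"
proof -
  have "card ((b \<circ> Transposition.transpose X Y) -` {i}) = card (b -` {i})" for i
  proof -
    have "(b \<circ> Transposition.transpose X Y) -` {i} = Transposition.transpose X Y -` (b -` {i})"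
      by auto
    moreover have "inj (Transposition.transpose X Y)"
      by (metis injI transpose_involutory)
    moreover have "surj (Transposition.transpose X Y)"
      by (metis surjI transpose_involutory)
    ultimately show ?thesis by (simp add: card_vimage_inj)
  qed
  thus ?thesis using assms by (auto simp: ballots_def)
qed

lemma N_sym:
  "(\<Sum>b\<in>ballots lam. a_pref lam X Y b) = (\<Sum>b\<in>ballots lam. a_pref lam Y X b)"
proof -
  let ?g = "\<lambda>b. b \<circ> Transposition.transpose X Y"
  have inv: "?g (?g b) = b" for b by (auto simp: fun_eq_iff)
  have bij: "bij_betw ?g (ballots lam) (ballots lam)"
    by (rule bij_betwI[where g="?g"]) (auto simp: swap_ballot inv)
  have "(\<Sum>b\<in>ballots lam. a_pref lam Y X b) = (\<Sum>b\<in>ballots lam. a_pref lam Y X (?g b))"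
    using sum.reindex_bij_betw[OF bij, of "a_pref lam Y X"] by simp
  also have "\<dots> = (\<Sum>b\<in>ballots lam. a_pref lam X Y b)"
    by (rule sum.cong) (auto simp: a_pref_def swap_ballot)
  finally show ?thesis by simp
qed

theorem mainTheorem6:
  fixes lam :: "nat list" and n :: nat
    and X Y :: "'c::finite"
    and T :: "'c profile \<Rightarrow> 'c profile" and p :: "'c profile"
  assumes "n \<ge> 2" and "card (UNIV :: 'c set) = n"
    and "is_composition lam n"
    and "X \<noteq> Y"
    and "T \<in> SO_P lam"
    and "T (r_pref lam X Y) = r_pref lam X Y"
    and "p \<in> profiles lam"
  shows "\<exists>q. (\<exists>c::real. q = (\<lambda>b. c * ones lam b)) \<and>
             equiv_XY lam X Y (\<lambda>b. T p b + q b) p"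
proof -
  let ?B = "ballots lam :: ('c \<Rightarrow> nat) set"
  let ?r = "r_pref lam X Y"
  have add: "\<And>u v. u \<in> profiles lam \<Longrightarrow> v \<in> profiles lam \<Longrightarrow> T (\<lambda>b. u b + v b) = (\<lambda>b. T u b + T v b)"
    and nrm: "\<And>u. u \<in> profiles lam \<Longrightarrow> pinner lam (T u) (T u) = pinner lam u u"
    using assms(5) by (auto simp: SO_P_def)
  have rprof: "?r \<in> profiles lam"
    by (auto simp: profiles_def r_pref_def a_pref_def)
  have ppr: "(\<lambda>b. p b + ?r b) \<in> profiles lam"
    using assms(7) rprof by (auto simp: profiles_def)
  have expand: "pinner lam (\<lambda>b. u b + v b) (\<lambda>b. u b + v b)
      = pinner lam u u + 2 * pinner lam u v + pinner lam v v" for u v :: "'c profile"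
    by (simp add: pinner_def sum.distrib[symmetric] sum_distrib_left algebra_simps)
  have "pinner lam (\<lambda>b. T p b + T ?r b) (\<lambda>b. T p b + T ?r b)
      = pinner lam (\<lambda>b. p b + ?r b) (\<lambda>b. p b + ?r b)"
    using nrm[OF ppr] add[OF assms(7) rprof] by simp
  hence key: "pinner lam (T p) ?r = pinner lam p ?r"
    unfolding expand using nrm[OF assms(7)] nrm[OF rprof] assms(6) by simp
  define d1 where "d1 = pinner lam (\<lambda>b. T p b - p b) (a_pref lam X Y)"
  define d2 where "d2 = pinner lam (\<lambda>b. T p b - p b) (a_pref lam Y X)"
  have "d1 - d2 = pinner lam (T p) ?r - pinner lam p ?r"
    unfolding d1_def d2_def pinner_def r_pref_def
    by (simp add: sum_subtractf[symmetric] algebra_simps)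
  hence d12: "d1 = d2" using key by simp
  define N where "N = (\<Sum>b\<in>?B. a_pref lam X Y b)"
  have N2: "N = (\<Sum>b\<in>?B. a_pref lam Y X b)" unfolding N_def by (rule N_sym)
  have nn: "\<And>b. a_pref lam X Y b \<ge> 0" by (simp add: a_pref_def)
  define c where "c = - d1 / N"
  have e1: "pinner lam (\<lambda>b. T p b + c * ones lam b - p b) (a_pref lam X Y) = d1 + c * N"
    unfolding d1_def N_def pinner_def
    by (simp add: sum.distrib[symmetric] sum_distrib_left algebra_simps ones_def cong: sum.cong)
  have e2: "pinner lam (\<lambda>b. T p b + c * ones lam b - p b) (a_pref lam Y X) = d2 + c * N"
    unfolding d2_def N2 pinner_def
    by (simp add: sum.distrib[symmetric] sum_distrib_left algebra_simps ones_def cong: sum.cong)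
  have z: "d1 + c * N = 0"
  proof (cases "N = 0")
    case True
    hence "\<forall>b\<in>?B. a_pref lam X Y b = 0"
      using sum_nonneg_eq_0_iff[OF finite_ballots[of lam], of "a_pref lam X Y"] nn N_def by auto
    hence "d1 = 0" unfolding d1_def pinner_def by simp
    thus ?thesis using True by simp
  next
    case False thus ?thesis unfolding c_def by simp
  qed
  show ?thesis
    apply (rule exI[of _ "\<lambda>b. c * ones lam b"])
    using e1 e2 z d12 by (auto simp: equiv_XY_def add_diff_eq)
qed

end
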